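(* Let $f\in\mathbb{R}[\mathbf{x}]$, $\mathscr{A}=\operatorname{supp}(f)$, and let $\mathscr{B}\subseteq\mathbb{N}^n$ be a finite set of exponents. Let $f^1_{\mathrm{ts}}$ be the optimal value of $$\mathbf{P}^1_{\mathrm{ts}}:\quad\inf_{\mathbf{y}}\{L_{\mathbf{y}}(f):\ \mathbf{B}_{G^{(1)}}\circ\mathbf{M}_{\mathscr{B}}(\mathbf{y})\in\Pi_{G^{(1)}}(\mathbb{S}^+_{|\mathscr{B}|}),\ y_{\mathbf{0}}=1\}$$ and let $f_{\mathrm{sdsos}}=\sup\{b\in\mathbb{R}: f-b\in\mathrm{SDSOS}\}$. Then $f^1_{\mathrm{ts}}\ge f_{\mathrm{sdsos}}$.
   Context: A symmetric $t\times t$ matrix $\mathbf{G}$ is diagonally dominant if $\mathbf{G}_{ii}\ge\sum_{j\ne i}|\mathbf{G}_{ij}|$ for all $i$, and scaled diagonally dominant if $\mathbf{D}\mathbf{G}\mathbf{D}$ is diagonally dominant for some positive definite diagonal matrix $\mathbf{D}$. A polynomial $h$ belongs to $\mathrm{SDSOS}$ if $h=(\mathbf{x}^{\mathscr{B}})^\intercal\mathbf{G}\,\mathbf{x}^{\mathscr{B}}$ for some scaled diagonally dominant $\mathbf{G}$ indexed by $\mathscr{B}$, where $\mathbf{x}^{\mathscr{B}}=(\mathbf{x}^\beta)_{\beta\in\mathscr{B}}$. Graphs: a chordal extension $G'$ of $G$ is a chordal graph (every cycle of length $\ge4$ has a chord) on the same nodes containing $G$; chordal extensions are fixed so that $G\subseteq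 H$ implies $G'\subseteq H'$. For a graph $G$ with nodes $V\subseteq\mathbb{N}^n$, $\operatorname{supp}(G)=\{\beta+\gamma:\beta=\gamma\in V\text{ or }\{\beta,\gamma\}\in E(G)\}$. $G^{(0)}$ is the graph with nodes $\mathscr{B}$ and edges $\{\beta,\gamma\}$, $\beta\ne\gamma$, $\beta+\gamma\in\mathscr{A}\cup2\mathscr{B}$; $F^{(1)}$ has nodes $\mathscr{B}$ and edges $\{\beta,\gamma\}$, $\beta\ne\gamma$, $\beta+\gamma\in\operatorname{supp}(G^{(0)})$; $G^{(1)}=(F^{(1)})'$. $L_{\mathbf{y}}(\sum f_\alpha\mathbf{x}^\alpha)=\sum f_\alpha y_\alpha$; $\mathbf{M}_{\mathscr{B}}(\mathbf{y})$ is indexed by $\mathscr{B}$ with $(\beta,\gamma)$-entry $y_{\beta+\gamma}$. For a graph $G$ on nodes $V$: $\mathbb{S}(G)$ is the set of symmetric matrices indexed by $V$ vanishing off the pattern of $G$ (off-diagonal non-edges); $\Pi_G$ zeroes off-pattern entries; $\Pi_G(\mathbb{S}^+_{|V|})=\{\Pi_G(\mathbf{Q}):\mathbf{Q}\succeq0\}$; $\mathbf{B}_G$ is the adjacency matrix with unit diagonal; $\circ$ is the entrywise product. *)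

theory Defs
  imports "HOL-Library.Extended_Real"
begin

text \<open>Exponent vectors in N^n are functions 'v => nat with 'v a finite type (n = CARD('v)).
  Polynomials are coefficient functions with finite support. Matrices indexed by a finite
  set B of exponents are functions monom => monom => real (only entries on B x B matter).\<close>

type_synonym 'v monom = "'v \<Rightarrow> nat"

definition madd :: "'v monom \<Rightarrow> 'v monom \<Rightarrow> 'v monom" where
  "madd a b = (\<lambda>i. a i + b i)"

definition mzero :: "'v monom" where
  "mzero = (\<lambda>_. 0)"

definition poly_supp :: "('v monom \<Rightarrow> real) \<Rightarrow> 'v monom set" where
  "poly_supp f = {\<alpha>. f \<alpha> \<noteq> 0}"

definition Ly :: "('v monom \<Rightarrow> real) \<Rightarrow> ('v monom \<Rightarrow> real) \<Rightarrow> real" where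
  "Ly y f = (\<Sum>\<alpha>\<in>poly_supp f. f \<alpha> * y \<alpha>)"

text \<open>Gram-matrix representation: h = (x^B)^T G x^B.\<close>
definition gram_rep :: "'v monom set \<Rightarrow> ('v monom \<Rightarrow> 'v monom \<Rightarrow> real) \<Rightarrow> ('v monom \<Rightarrow> real) \<Rightarrow> bool" where
  "gram_rep B G h = (\<forall>\<alpha>. h \<alpha> = (\<Sum>p\<in>{(\<beta>,\<gamma>)\<in>B \<times> B. madd \<beta> \<gamma> = \<alpha>}. G (fst p) (snd p)))"

definition symmetric_on :: "'v monom set \<Rightarrow> ('v monom \<Rightarrow> 'v monom \<Rightarrow> real) \<Rightarrow> bool" where
  "symmetric_on B G = (\<forall>\<beta>\<in>B. \<forall>\<gamma>\<in>B. G \<beta> \<gamma> = G \<gamma> \<beta>)"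

definition diag_dominant :: "'v monom set \<Rightarrow> ('v monom \<Rightarrow> 'v monom \<Rightarrow> real) \<Rightarrow> bool" where
  "diag_dominant B G = (symmetric_on B G \<and>
     (\<forall>i\<in>B. G i i \<ge> (\<Sum>j\<in>B - {i}. \<bar>G i j\<bar>)))"

definition scaled_diag_dominant :: "'v monom set \<Rightarrow> ('v monom \<Rightarrow> 'v monom \<Rightarrow> real) \<Rightarrow> bool" where
  "scaled_diag_dominant B G = (symmetric_on B G \<and>
     (\<exists>d. (\<forall>i\<in>B. d i > 0) \<and> diag_dominant B (\<lambda>i j. d i * G i j * d j)))"

definition sdsos :: "'v monom set \<Rightarrow> ('v monom \<Rightarrow> real) \<Rightarrow> bool" where
  "sdsos B h = (\<exists>G. scaled_diag_dominant B G \<and> gram_rep B G h)"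

definition supp_graph :: "'v monom set \<Rightarrow> ('v monom \<Rightarrow> 'v monom \<Rightarrow> bool) \<Rightarrow> 'v monom set" where
  "supp_graph V E = {madd \<beta> \<gamma> | \<beta> \<gamma>. \<beta> \<in> V \<and> \<gamma> \<in> V \<and> (\<beta> = \<gamma> \<or> E \<beta> \<gamma>)}"

definition G0_edge :: "'v monom set \<Rightarrow> 'v monom set \<Rightarrow> 'v monom \<Rightarrow> 'v monom \<Rightarrow> bool" where
  "G0_edge A B \<beta> \<gamma> = (\<beta> \<in> B \<and> \<gamma> \<in> B \<and> \<beta> \<noteq> \<gamma> \<and>
      madd \<beta> \<gamma> \<in> A \<union> (\<lambda>b. madd b b) ` B)"

definition F1_edge :: "'v monom set \<Rightarrow> 'v monom set \<Rightarrow> 'v monom \<Rightarrow> 'v monom \<Rightarrow> bool" where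
  "F1_edge A B \<beta> \<gamma> = (\<beta> \<in> B \<and> \<gamma> \<in> B \<and> \<beta> \<noteq> \<gamma> \<and>
      madd \<beta> \<gamma> \<in> supp_graph B (G0_edge A B))"

definition chordal :: "'a set \<Rightarrow> ('a \<Rightarrow> 'a \<Rightarrow> bool) \<Rightarrow> bool" where
  "chordal V E = (\<forall>cs. distinct cs \<and> length cs \<ge> 4 \<and> set cs \<subseteq> V \<and>
      (\<forall>i<length cs. E (cs ! i) (cs ! ((i + 1) mod length cs))) \<longrightarrow>
      (\<exists>i<length cs. \<exists>j<length cs. i \<noteq> j \<and> j \<noteq> (i + 1) mod length cs \<and>
          i \<noteq> (j + 1) mod length cs \<and> E (cs ! i) (cs ! j)))"

definition chordal_extension :: "'a set \<Rightarrow> ('a \<Rightarrow> 'a \<Rightarrow> bool) \<Rightarrow> ('a \<Rightarrow> 'a \<Rightarrow> bool) \<Rightarrow> bool" where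
  "chordal_extension V E E' = ((\<forall>x y. E' x y \<longrightarrow> x \<in> V \<and> y \<in> V \<and> x \<noteq> y) \<and>
      (\<forall>x y. E' x y \<longrightarrow> E' y x) \<and> (\<forall>x y. E x y \<longrightarrow> E' x y) \<and> chordal V E')"

definition psd_on :: "'v monom set \<Rightarrow> ('v monom \<Rightarrow> 'v monom \<Rightarrow> real) \<Rightarrow> bool" where
  "psd_on B Q = (symmetric_on B Q \<and>
     (\<forall>u. 0 \<le> (\<Sum>\<beta>\<in>B. \<Sum>\<gamma>\<in>B. u \<beta> * Q \<beta> \<gamma> * u \<gamma>)))"

definition moment_mat :: "('v monom \<Rightarrow> real) \<Rightarrow> 'v monom \<Rightarrow> 'v monom \<Rightarrow> real" where
  "moment_mat y \<beta> \<gamma> = y (madd \<beta> \<gamma>)"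

definition adj_unit :: "('a \<Rightarrow> 'a \<Rightarrow> bool) \<Rightarrow> 'a \<Rightarrow> 'a \<Rightarrow> real" where
  "adj_unit E \<beta> \<gamma> = (if \<beta> = \<gamma> \<or> E \<beta> \<gamma> then 1 else 0)"

definition hadamard :: "('a \<Rightarrow> 'a \<Rightarrow> real) \<Rightarrow> ('a \<Rightarrow> 'a \<Rightarrow> real) \<Rightarrow> 'a \<Rightarrow> 'a \<Rightarrow> real" where
  "hadamard M N \<beta> \<gamma> = M \<beta> \<gamma> * N \<beta> \<gamma>"

definition proj_graph :: "('a \<Rightarrow> 'a \<Rightarrow> bool) \<Rightarrow> ('a \<Rightarrow> 'a \<Rightarrow> real) \<Rightarrow> 'a \<Rightarrow> 'a \<Rightarrow> real" where
  "proj_graph E Q \<beta> \<gamma> = (if \<beta> = \<gamma> \<or> E \<beta> \<gamma> then Q \<beta> \<gamma> else 0)"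

definition in_proj_psd :: "'v monom set \<Rightarrow> ('v monom \<Rightarrow> 'v monom \<Rightarrow> bool) \<Rightarrow> ('v monom \<Rightarrow> 'v monom \<Rightarrow> real) \<Rightarrow> bool" where
  "in_proj_psd B E M = (\<exists>Q. psd_on B Q \<and> (\<forall>\<beta>\<in>B. \<forall>\<gamma>\<in>B. M \<beta> \<gamma> = proj_graph E Q \<beta> \<gamma>))"

definition ts_feasible :: "'v monom set \<Rightarrow> ('v monom \<Rightarrow> 'v monom \<Rightarrow> bool) \<Rightarrow> ('v monom \<Rightarrow> real) \<Rightarrow> bool" where
  "ts_feasible B E y = (in_proj_psd B E (hadamard (adj_unit E) (moment_mat y)) \<and> y mzero = 1)"

end

theory Submission
  imports Defs
begin

lemma sum_minus_i:
  assumes "finite B" "i \<in> B"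
  shows "(\<Sum>j\<in>B-{i}. g j) = (\<Sum>j\<in>B. if j \<noteq> i then g j else (0::real))"
proof -
  have "(\<Sum>j\<in>B. if j \<noteq> i then g j else (0::real)) = (if i \<noteq> i then g i else 0) + (\<Sum>j\<in>B-{i}. if j \<noteq> i then g j else 0)"
    by (rule sum.remove[OF assms])
  also have "\<dots> = (\<Sum>j\<in>B-{i}. g j)"
  proof -
    have "(\<Sum>j\<in>B-{i}. if j \<noteq> i then g j else (0::real)) = (\<Sum>j\<in>B-{i}. g j)"
      by (rule sum.cong) auto
    then show ?thesis by simp
  qed
  finally show ?thesis by simp
qed

lemma sdd_pair_nonneg:
  fixes H N :: "'a \<Rightarrow> 'a \<Rightarrow> real"
  assumes fin: "finite B"
    and symH: "\<forall>i\<in>B. \<forall>j\<in>B. H i j = H j i"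
    and dd: "\<forall>i\<in>B. H i i \<ge> (\<Sum>j\<in>B-{i}. \<bar>H i j\<bar>)"
    and Ndiag: "\<forall>i\<in>B. N i i \<ge> 0"
    and Noff: "\<forall>i\<in>B. \<forall>j\<in>B. i \<noteq> j \<longrightarrow> 2 * \<bar>N i j\<bar> \<le> N i i + N j j"
  shows "0 \<le> (\<Sum>i\<in>B. \<Sum>j\<in>B. H i j * N i j)"
proof -
  have 1: "(\<Sum>j\<in>B. H i j * N i j) \<ge> H i i * N i i - (\<Sum>j\<in>B-{i}. \<bar>H i j\<bar> * N i i)/2 - (\<Sum>j\<in>B-{i}. \<bar>H i j\<bar> * N j j)/2"
    if i: "i \<in> B" for i
  proof -
    have "(\<Sum>j\<in>B. H i j * N i j) = H i i * N i i + (\<Sum>j\<in>B-{i}. H i j * N i j)"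
      using fin i by (simp add: sum.remove)
    moreover have "(\<Sum>j\<in>B-{i}. H i j * N i j) \<ge> (\<Sum>j\<in>B-{i}. - (\<bar>H i j\<bar> * N i i + \<bar>H i j\<bar> * N j j)/2)"
    proof (rule sum_mono)
      fix j assume j: "j \<in> B - {i}"
      have a: "2 * \<bar>N i j\<bar> \<le> N i i + N j j" using Noff i j by auto
      have "\<bar>H i j * N i j\<bar> = \<bar>H i j\<bar> * \<bar>N i j\<bar>" by (simp add: abs_mult)
      also have "\<dots> \<le> \<bar>H i j\<bar> * ((N i i + N j j)/2)" using a by (intro mult_left_mono) auto
      finally show "- (\<bar>H i j\<bar> * N i i + \<bar>H i j\<bar> * N j j)/2 \<le> H i j * N i j"
        by (simp add: algebra_simps) 
    qed
    moreover have "(\<Sum>j\<in>B-{i}. - (\<bar>H i j\<bar> * N i i + \<bar>H i j\<bar> * N j j)/2)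
       = - (\<Sum>j\<in>B-{i}. \<bar>H i j\<bar> * N i i)/2 - (\<Sum>j\<in>B-{i}. \<bar>H i j\<bar> * N j j)/2"
      by (simp add: sum_divide_distrib[symmetric] sum.distrib[symmetric] sum_negf[symmetric] algebra_simps)
    ultimately show ?thesis by linarith
  qed
  have sw: "(\<Sum>i\<in>B. \<Sum>j\<in>B-{i}. \<bar>H i j\<bar> * N j j) = (\<Sum>i\<in>B. \<Sum>j\<in>B-{i}. \<bar>H i j\<bar> * N i i)"
  proof -
    have "(\<Sum>i\<in>B. \<Sum>j\<in>B-{i}. \<bar>H i j\<bar> * N j j) = (\<Sum>i\<in>B. \<Sum>j\<in>B. if j \<noteq> i then \<bar>H i j\<bar> * N j j else 0)"
      using fin by (intro sum.cong refl sum_minus_i) auto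
    also have "\<dots> = (\<Sum>j\<in>B. \<Sum>i\<in>B. if j \<noteq> i then \<bar>H i j\<bar> * N j j else 0)"
      by (rule sum.swap)
    also have "\<dots> = (\<Sum>j\<in>B. \<Sum>i\<in>B. if i \<noteq> j then \<bar>H j i\<bar> * N j j else 0)"
      using symH by (intro sum.cong refl) auto
    also have "\<dots> = (\<Sum>j\<in>B. \<Sum>i\<in>B-{j}. \<bar>H j i\<bar> * N j j)"
      using fin by (intro sum.cong refl sum_minus_i[symmetric]) auto
    finally show ?thesis .
  qed
  have "0 \<le> (\<Sum>i\<in>B. N i i * (H i i - (\<Sum>j\<in>B-{i}. \<bar>H i j\<bar>)))"
    using Ndiag dd by (intro sum_nonneg mult_nonneg_nonneg) auto
  also have "\<dots> = (\<Sum>i\<in>B. H i i * N i i - (\<Sum>j\<in>B-{i}. \<bar>H i j\<bar> * N i i))"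
    by (simp add: algebra_simps sum_distrib_left sum_distrib_right)
  also have "\<dots> = (\<Sum>i\<in>B. H i i * N i i - (\<Sum>j\<in>B-{i}. \<bar>H i j\<bar> * N i i)/2 - (\<Sum>j\<in>B-{i}. \<bar>H i j\<bar> * N j j)/2)"
    using sw by (simp add: sum.distrib sum_subtractf sum_divide_distrib[symmetric])
  also have "\<dots> \<le> (\<Sum>i\<in>B. \<Sum>j\<in>B. H i j * N i j)"
    using 1 by (intro sum_mono) auto
  finally show ?thesis .
qed


lemma madd_zero: "madd a b = mzero \<Longrightarrow> a = mzero"
  unfolding madd_def mzero_def by (metis add_is_0)

lemma madd_comm: "madd a b = madd b a" by (simp add: madd_def add.commute)

lemma quad2:
  assumes "psd_on B Q" "finite B" "i \<in> B" "j \<in> B" "i \<noteq> j"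
  shows "0 \<le> s*s * Q i i + 2*s*t * Q i j + t*t * Q j j"
proof -
  define u where "u = (\<lambda>k. if k = i then s else if k = j then t else (0::real))"
  have sy: "Q i j = Q j i" using assms unfolding psd_on_def symmetric_on_def by auto
  have r: "(\<Sum>\<gamma>\<in>B. u \<beta> * Q \<beta> \<gamma> * u \<gamma>) = u \<beta> * Q \<beta> i * s + u \<beta> * Q \<beta> j * t" for \<beta>
  proof -
    have "(\<Sum>\<gamma>\<in>B. u \<beta> * Q \<beta> \<gamma> * u \<gamma>) = (\<Sum>\<gamma>\<in>{i,j}. u \<beta> * Q \<beta> \<gamma> * u \<gamma>)"
      using assms by (intro sum.mono_neutral_right) (auto simp: u_def)
    also have "\<dots> = u \<beta> * Q \<beta> i * s + u \<beta> * Q \<beta> j * t" using assms by (simp add: u_def)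
    finally show ?thesis .
  qed
  have "(\<Sum>\<beta>\<in>B. \<Sum>\<gamma>\<in>B. u \<beta> * Q \<beta> \<gamma> * u \<gamma>) = (\<Sum>\<beta>\<in>B. u \<beta> * Q \<beta> i * s + u \<beta> * Q \<beta> j * t)"
    by (simp add: r)
  also have "\<dots> = (\<Sum>\<beta>\<in>{i,j}. u \<beta> * Q \<beta> i * s + u \<beta> * Q \<beta> j * t)"
    using assms by (intro sum.mono_neutral_right) (auto simp: u_def)
  also have "\<dots> = s*s * Q i i + 2*s*t * Q i j + t*t * Q j j"
    using assms sy by (simp add: u_def algebra_simps)
  finally show ?thesis using assms(1)[unfolded psd_on_def, THEN conjunct2, rule_format, of u] by simp
qed

theorem theorem7p3:
  fixes f :: "('v::finite) monom \<Rightarrow> real"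
    and B :: "'v monom set"
    and E1 :: "'v monom \<Rightarrow> 'v monom \<Rightarrow> bool"
  assumes "finite (poly_supp f)"
    and "finite B"
    and "chordal_extension B (F1_edge (poly_supp f) B) E1"
  shows "(SUP b\<in>{b::real. sdsos B (\<lambda>\<alpha>. f \<alpha> - (if \<alpha> = mzero then b else 0))}. ereal b)
         \<le> (INF y\<in>{y. ts_feasible B E1 y}. ereal (Ly y f))"
proof (intro SUP_least INF_greatest)
  fix b y
  assume hb: "b \<in> {b::real. sdsos B (\<lambda>\<alpha>. f \<alpha> - (if \<alpha> = mzero then b else 0))}"
    and hy: "y \<in> {y. ts_feasible B E1 y}"
  note finB = assms(2)
  define h where "h = (\<lambda>\<alpha>. f \<alpha> - (if \<alpha> = mzero then b else 0))"
  obtain G d where symG: "symmetric_on B G" and dpos: "\<forall>i\<in>B. d i > 0"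
    and ddH: "diag_dominant B (\<lambda>i j. d i * G i j * d j)" and gr: "gram_rep B G h"
    using hb unfolding sdsos_def scaled_diag_dominant_def h_def by auto
  obtain Q where psd: "psd_on B Q"
    and hQ: "\<forall>\<beta>\<in>B. \<forall>\<gamma>\<in>B. hadamard (adj_unit E1) (moment_mat y) \<beta> \<gamma> = proj_graph E1 Q \<beta> \<gamma>"
    and y0: "y mzero = 1"
    using hy unfolding ts_feasible_def in_proj_psd_def by auto
  have ydiag: "y (madd i i) = Q i i" if "i \<in> B" for i
    using hQ[rule_format, OF that that] by (simp add: hadamard_def adj_unit_def proj_graph_def moment_mat_def)
  have yedge: "y (madd i j) = Q i j" if "i \<in> B" "j \<in> B" "E1 i j" for i j
    using hQ[rule_format, OF that(1,2)] that(3) by (simp add: hadamard_def adj_unit_def proj_graph_def moment_mat_def)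
  have Qdiag: "Q i i \<ge> 0" if i: "i \<in> B" for i
  proof -
    define u where "u = (\<lambda>k. if k = i then 1 else (0::real))"
    have r: "(\<Sum>\<gamma>\<in>B. u \<beta> * Q \<beta> \<gamma> * u \<gamma>) = u \<beta> * Q \<beta> i" for \<beta>
    proof -
      have "(\<Sum>\<gamma>\<in>B. u \<beta> * Q \<beta> \<gamma> * u \<gamma>) = (\<Sum>\<gamma>\<in>{i}. u \<beta> * Q \<beta> \<gamma> * u \<gamma>)"
        using i finB by (intro sum.mono_neutral_right) (auto simp: u_def)
      then show ?thesis by (simp add: u_def)
    qed
    have "(\<Sum>\<beta>\<in>B. \<Sum>\<gamma>\<in>B. u \<beta> * Q \<beta> \<gamma> * u \<gamma>) = (\<Sum>\<beta>\<in>B. u \<beta> * Q \<beta> i)"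
      by (simp add: r)
    also have "\<dots> = (\<Sum>\<beta>\<in>{i}. u \<beta> * Q \<beta> i)"
      using i finB by (intro sum.mono_neutral_right) (auto simp: u_def)
    also have "\<dots> = Q i i" by (simp add: u_def)
    finally show ?thesis using psd[unfolded psd_on_def, THEN conjunct2, rule_format, of u] by simp
  qed
  define S where "S = poly_supp f \<union> {mzero} \<union> (\<lambda>b. madd b b) ` B"
  have edgeS: "E1 i j" if "i \<in> B" "j \<in> B" "i \<noteq> j" "madd i j \<in> S" for i j
  proof -
    have "madd i j \<noteq> mzero" using that(3) madd_zero[of i j] madd_zero[of j i] madd_comm[of i j]
      by metis
    then have "madd i j \<in> poly_supp f \<union> (\<lambda>b. madd b b) ` B" using that(4) S_def by auto
    then have "G0_edge (poly_supp f) B i j" using that unfolding G0_edge_def by auto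
    then have "madd i j \<in> supp_graph B (G0_edge (poly_supp f) B)"
      using that unfolding supp_graph_def by blast
    then have "F1_edge (poly_supp f) B i j" using that unfolding F1_edge_def by auto
    then show ?thesis using assms(3) unfolding chordal_extension_def by blast
  qed
  define z where "z = (\<lambda>\<alpha>. if \<alpha> \<in> S then y \<alpha> else 0)"
  define N where "N = (\<lambda>i j. z (madd i j) / (d i * d j))"
  define H where "H = (\<lambda>i j. d i * G i j * d j)"
  have zdiag: "z (madd i i) = Q i i" if "i \<in> B" for i
    using that ydiag by (auto simp: z_def S_def)
  have Ndiag: "\<forall>i\<in>B. N i i \<ge> 0"
    using zdiag Qdiag dpos by (auto simp: N_def)
  have Noff: "\<forall>i\<in>B. \<forall>j\<in>B. i \<noteq> j \<longrightarrow> 2 * \<bar>N i j\<bar> \<le> N i i + N j j"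
  proof (intro ballI impI)
    fix i j assume i: "i \<in> B" and j: "j \<in> B" and ij: "i \<noteq> j"
    have di: "d i > 0" and dj: "d j > 0" using dpos i j by auto
    have nii: "N i i = Q i i / (d i * d i)" and njj: "N j j = Q j j / (d j * d j)"
      using zdiag i j by (auto simp: N_def)
    show "2 * \<bar>N i j\<bar> \<le> N i i + N j j"
    proof (cases "madd i j \<in> S")
      case True
      then have nij: "N i j = Q i j / (d i * d j)"
        using yedge[OF i j edgeS[OF i j ij True]] by (simp add: N_def z_def)
      have p1: "0 \<le> (1/d i)*(1/d i) * Q i i + 2*(1/d i)*(1/d j) * Q i j + (1/d j)*(1/d j) * Q j j"
        by (rule quad2[OF psd finB i j ij])
      have p2: "0 \<le> (1/d i)*(1/d i) * Q i i + 2*(1/d i)*(-1/d j) * Q i j + (-1/d j)*(-1/d j) * Q j j"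
        by (rule quad2[OF psd finB i j ij])
      have "0 \<le> N i i + 2 * N i j + N j j" using p1 unfolding nii njj nij by (simp add: field_simps)
      moreover have "0 \<le> N i i - 2 * N i j + N j j" using p2 unfolding nii njj nij by (simp add: field_simps)
      ultimately show ?thesis by linarith
    next
      case False
      then have "N i j = 0" by (simp add: N_def z_def)
      then show ?thesis using Ndiag i j by auto
    qed
  qed
  have symH: "\<forall>i\<in>B. \<forall>j\<in>B. H i j = H j i"
    using symG unfolding H_def symmetric_on_def by (auto simp: mult.commute)
  have dd: "\<forall>i\<in>B. H i i \<ge> (\<Sum>j\<in>B-{i}. \<bar>H i j\<bar>)"
    using ddH unfolding H_def diag_dominant_def by auto
  have nonneg: "0 \<le> (\<Sum>i\<in>B. \<Sum>j\<in>B. H i j * N i j)"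
    by (rule sdd_pair_nonneg[OF finB symH dd Ndiag Noff])
  have HN: "H i j * N i j = G i j * z (madd i j)" if "i \<in> B" "j \<in> B" for i j
  proof -
    have "d i > 0" "d j > 0" using dpos that by auto
    then show ?thesis by (simp add: H_def N_def field_simps)
  qed
  have nonneg2: "0 \<le> (\<Sum>p\<in>B \<times> B. G (fst p) (snd p) * z (madd (fst p) (snd p)))"
    using nonneg HN by (simp add: sum.cartesian_product case_prod_beta)
  define T where "T = poly_supp f \<union> {mzero} \<union> (\<lambda>p. madd (fst p) (snd p)) ` (B \<times> B)"
  have finT: "finite T" using assms(1) finB by (simp add: T_def)
  have "(\<Sum>p\<in>B \<times> B. G (fst p) (snd p) * z (madd (fst p) (snd p)))
      = (\<Sum>\<alpha>\<in>T. \<Sum>p\<in>{p. p \<in> B \<times> B \<and> madd (fst p) (snd p) = \<alpha>}. G (fst p) (snd p) * z (madd (fst p) (snd p)))"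
    by (rule sum.group[symmetric]) (use finB finT in \<open>auto simp: T_def\<close>)
  also have "\<dots> = (\<Sum>\<alpha>\<in>T. h \<alpha> * z \<alpha>)"
  proof (rule sum.cong[OF refl])
    fix \<alpha> assume "\<alpha> \<in> T"
    have "(\<Sum>p\<in>{p. p \<in> B \<times> B \<and> madd (fst p) (snd p) = \<alpha>}. G (fst p) (snd p) * z (madd (fst p) (snd p)))
        = (\<Sum>p\<in>{p. p \<in> B \<times> B \<and> madd (fst p) (snd p) = \<alpha>}. G (fst p) (snd p) * z \<alpha>)"
      by (rule sum.cong) auto
    also have "\<dots> = (\<Sum>p\<in>{(\<beta>,\<gamma>)\<in>B \<times> B. madd \<beta> \<gamma> = \<alpha>}. G (fst p) (snd p)) * z \<alpha>"
    proof -
      have "{p. p \<in> B \<times> B \<and> madd (fst p) (snd p) = \<alpha>} = {(\<beta>,\<gamma>)\<in>B \<times> B. madd \<beta> \<gamma> = \<alpha>}" by auto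
      then show ?thesis by (simp add: sum_distrib_right)
    qed
    also have "\<dots> = h \<alpha> * z \<alpha>" using gr unfolding gram_rep_def by metis
    finally show "(\<Sum>p\<in>{p. p \<in> B \<times> B \<and> madd (fst p) (snd p) = \<alpha>}. G (fst p) (snd p) * z (madd (fst p) (snd p))) = h \<alpha> * z \<alpha>" .
  qed
  also have "\<dots> = (\<Sum>\<alpha>\<in>T. h \<alpha> * y \<alpha>)"
  proof (rule sum.cong[OF refl])
    fix \<alpha> assume "\<alpha> \<in> T"
    show "h \<alpha> * z \<alpha> = h \<alpha> * y \<alpha>"
    proof (cases "h \<alpha> = 0")
      case False
      then have "\<alpha> \<in> S" unfolding h_def S_def poly_supp_def by (auto split: if_splits)
      then show ?thesis by (simp add: z_def)
    qed simp
  qed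
  also have "\<dots> = (\<Sum>\<alpha>\<in>T. f \<alpha> * y \<alpha>) - (\<Sum>\<alpha>\<in>T. (if \<alpha> = mzero then b else 0) * y \<alpha>)"
    by (simp add: h_def left_diff_distrib sum_subtractf)
  finally have eq1: "(\<Sum>p\<in>B \<times> B. G (fst p) (snd p) * z (madd (fst p) (snd p)))
     = (\<Sum>\<alpha>\<in>T. f \<alpha> * y \<alpha>) - (\<Sum>\<alpha>\<in>T. (if \<alpha> = mzero then b else 0) * y \<alpha>)" .
  have eq2: "(\<Sum>\<alpha>\<in>T. (if \<alpha> = mzero then b else 0) * y \<alpha>) = b"
  proof -
    have "(\<Sum>\<alpha>\<in>T. (if \<alpha> = mzero then b else 0) * y \<alpha>) = (\<Sum>\<alpha>\<in>T. if \<alpha> = mzero then b * y \<alpha> else 0)"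
      by (rule sum.cong) auto
    also have "\<dots> = b * y mzero" using finT by (simp add: sum.delta T_def)
    finally show ?thesis using y0 by simp
  qed
  have sub: "poly_supp f \<subseteq> T" by (auto simp: T_def)
  have eq3: "(\<Sum>\<alpha>\<in>T. f \<alpha> * y \<alpha>) = Ly y f"
    unfolding Ly_def
  proof (rule sum.mono_neutral_right[OF finT sub])
    show "\<forall>i\<in>T - poly_supp f. f i * y i = 0" by (simp add: poly_supp_def)
  qed
  have "0 \<le> (\<Sum>\<alpha>\<in>T. f \<alpha> * y \<alpha>) - (\<Sum>\<alpha>\<in>T. (if \<alpha> = mzero then b else 0) * y \<alpha>)"
    using nonneg2 by (simp only: eq1)
  then have "0 \<le> Ly y f - b" by (simp only: eq2 eq3)
  then show "ereal b \<le> ereal (Ly y f)" by simp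
qed

end
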